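(* Let $f_{r,k}(x)=x^2\exp(r-x)+k$. For every $k\in[0,2)$ there exists an interval $[r_1,r_2]$ of positive $r$-values such that for every $r\in[r_1,r_2]$ the map $f_{r,k}$ has an attracting fixed point $x_f>2$. *)

theory Defs
  imports "HOL-Analysis.Analysis"
begin

definition f :: "real \<Rightarrow> real \<Rightarrow> real \<Rightarrow> real" where
  "f r k x = x^2 * exp (r - x) + k"

definition attracting_fixed_point :: "(real \<Rightarrow> real) \<Rightarrow> real \<Rightarrow> bool" where
  "attracting_fixed_point g x \<longleftrightarrow> g x = x \<and> g differentiable (at x) \<and> \<bar>deriv g x\<bar> < 1"

end

theory Submission
  imports Defs
begin

lemma f_deriv: "((f r k) has_real_derivative (2*x*exp(r-x) - x^2*exp(r-x))) (at x)"
  unfolding f_def [abs_def]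
  by (auto intro!: derivative_eq_intros simp: algebra_simps power2_eq_square)

lemma exp_big: "121/12 < exp (11/4::real)"
proof -
  have "exp (11/4::real) = exp (11/32) ^ 8"
    by (simp add: exp_of_nat_mult[symmetric])
  moreover have "(1 + 11/32::real) ^ 8 \<le> exp (11/32) ^ 8"
    by (rule power_mono) (use exp_ge_add_one_self[of "11/32::real"] in auto)
  moreover have "(121/12::real) < (1 + 11/32) ^ 8"
  proof -
    have "(1 + 11/32::real) ^ 8 = 43^8/32^8" by (simp add: power_divide)
    then show ?thesis by simp
  qed
  ultimately show ?thesis by linarith
qed

theorem corollary3p5:
  fixes k :: real
  assumes "0 \<le> k" and "k < 2"
  shows "\<exists>r1 r2. 0 < r1 \<and> r1 < r2 \<and>
           (\<forall>r\<in>{r1..r2}. \<exists>xf. xf > 2 \<and> attracting_fixed_point (f r k) xf)"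
proof -
  define c2 where "c2 = (11/4 - k) * 16 / 121"
  define r2 where "r2 = 11/4 + ln c2"
  define c0 where "c0 = (2 - k) / 4"
  define r0 where "r0 = 2 + ln c0"
  have c2pos: "c2 > 0" and c0pos: "c0 > 0" using assms by (auto simp: c2_def c0_def)
  have e2: "exp (r2 - 11/4) = c2" using c2pos by (simp add: r2_def)
  have e0: "exp (r0 - 2) = c0" using c0pos by (simp add: r0_def)
  have "exp (3/4::real) \<ge> 7/4" using exp_ge_add_one_self[of "3/4::real"] by simp
  hence "7/4 * c2 \<le> exp (3/4) * c2" using c2pos by (intro mult_right_mono) auto
  moreover have "c0 < 7/4 * c2" unfolding c0_def c2_def using assms by simp
  ultimately have "c0 < exp (3/4) * c2" by linarith
  also have "exp (3/4) * c2 = exp (r2 - 2)"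
  proof -
    have "r2 - 2 = 3/4 + (r2 - 11/4)" by simp
    then show ?thesis using e2 by (simp only: exp_add)
  qed
  finally have "exp (r0 - 2) < exp (r2 - 2)" using e0 by simp
  hence r02: "r0 < r2" by simp
  have "exp (-11/4) < c2"
  proof -
    have "exp (-11/4::real) = inverse (exp (11/4))" by (simp flip: exp_minus)
    also have "\<dots> < inverse (121/12)" using exp_big
      by (intro less_imp_inverse_less) auto
    also have "inverse (121/12::real) = 12/121" by simp
    also have "12/121 \<le> c2" unfolding c2_def using assms by simp
    finally show ?thesis .
  qed
  hence "exp (-11/4) < exp (r2 - 11/4)" using e2 by simp
  hence r2pos: "r2 > 0" by simp
  define r1 where "r1 = (max r0 0 + r2) / 2"
  have "0 < r1" "r1 < r2" "r0 < r1" using r02 r2pos by (auto simp: r1_def)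
  moreover have "\<exists>xf. xf > 2 \<and> attracting_fixed_point (f r k) xf" if r: "r \<in> {r1..r2}" for r
  proof -
    define h where "h x = f r k x - x" for x
    have "exp (r - 2) > exp (r0 - 2)" using r \<open>r0 < r1\<close> by simp
    hence h2: "h 2 > 0" using e0 unfolding h_def f_def c0_def by simp
    have "exp (r - 11/4) \<le> exp (r2 - 11/4)" using r by simp
    hence "(11/4)^2 * exp (r - 11/4) \<le> (11/4)^2 * c2" using e2 by simp
    hence h3: "h (11/4) \<le> 0" unfolding h_def f_def c2_def by (simp add: power2_eq_square)
    have cont: "continuous_on {2..11/4} h" unfolding h_def f_def
      by (intro continuous_intros)
    obtain x where x: "2 \<le> x" "x \<le> 11/4" "h x = 0"
      using IVT2'[of h "11/4" 0 2, OF h3 _ _ cont] h2 by auto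
    have x2: "x > 2" using x h2 by (cases "x = 2") auto
    have fx: "x^2 * exp (r - x) = x - k" using x(3) unfolding h_def f_def by simp
    have D: "deriv (f r k) x = 2*x*exp(r-x) - x^2*exp(r-x)"
      using f_deriv DERIV_imp_deriv by blast
    have "x * (2*x*exp(r-x) - x^2*exp(r-x)) = (2 - x) * (x^2 * exp (r-x))"
      by (simp add: algebra_simps power2_eq_square)
    also have "\<dots> = (2 - x) * (x - k)" using fx by simp
    finally have eq: "x * deriv (f r k) x = (2 - x) * (x - k)" using D by simp
    have a1: "\<bar>(2 - x) * (x - k)\<bar> = (x - 2) * (x - k)" using x2 assms
      by (simp add: abs_mult)
    have "(x - 2) * (x - k) \<le> (3/4) * (x - k)" using x x2 assms
      by (intro mult_right_mono) auto
    also have "\<dots> < x" using x2 assms by simp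
    finally have "\<bar>x * deriv (f r k) x\<bar> < x" unfolding eq a1 .
    hence "x * \<bar>deriv (f r k) x\<bar> < x * 1" using x2 by (simp add: abs_mult)
    hence "\<bar>deriv (f r k) x\<bar> < 1" using x2 by simp
    moreover have "f r k x = x" using x(3) unfolding h_def by simp
    moreover have "f r k differentiable (at x)"
      using f_deriv real_differentiable_def by blast
    ultimately show ?thesis using x2 unfolding attracting_fixed_point_def by blast
  qed
  ultimately show ?thesis by blast
qed

end
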